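(* Fix subgroups $s\neq s'$ in $\mathcal S$, a cohort $g\in\{1,\dots,\mathcal T\}$ and a period $t$ with $g\le t\le\mathcal T$. Assume $\mathbb E|Y_\tau(g';\sigma)|<\infty$ for all $\tau,g',\sigma$, and that $P(G=g,S=\sigma)>0$ for $\sigma\in\{s,s'\}$. (a) (Not-yet-treated comparison.) Suppose $P(G>t,S=\sigma)>0$ for $\sigma\in\{s,s'\}$, and: (i) (No anticipation) for every finite cohort $g'$, every $\tau<g'$ and every $\sigma\in\mathcal S$ with $P(G=g',S=\sigma)>0$: $\mathbb E[Y_\tau(g')\mid G=g',S=\sigma]=\mathbb E[Y_\tau(\infty)\mid G=g',S=\sigma]$; (ii) (Parallel gaps, not-yet-treated) $$\mathbb E[Y_t(\infty)-Y_{g-1}(\infty)\mid G=g,S=s]-\mathbb E[Y_t(\infty)-Y_{g-1}(\infty)\mid G=g,S=s']$$ $$=\mathbb E[Y_t(\infty)-Y_{g-1}(\infty)\mid G>t,S=s]-\mathbb E[Y_t(\infty)-Y_{g-1}(\infty)\mid G>t,S=s'].$$ Then $$DATT_{s-s'}(g,t)=\mathbb E[Y_t-Y_{g-1}\mid G=g,S=s]-\mathbb E[Y_t-Y_{g-1}\mid G=g,S=s']-\Big(\mathbb E[Y_t-Y_{g-1}\mid G>t,S=s]-\mathbb E[Y_t-Y_{g-1}\mid G>t,S=s']\Big).$$ (b) (Never-treated comparison.) Suppose $P(G=\infty,S=\sigma)>0$ for $\sigma\in\{s,s'\}$, that (i) holds, and that (ii) holds with the events $\{G>t\}$ replaced by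 $\{G=\infty\}$. Then the same formula holds with $\{G>t\}$ replaced by $\{G=\infty\}$ in the last two conditional expectations.
   Context: Time periods are $t=0,1,\dots,\mathcal T$; $\mathcal S$ is a finite set of subgroups. A unit is described by a random element consisting of: $G\in\{1,\dots,\mathcal T\}\cup\{\infty\}$, the first period in which the unit is treated ($G=\infty$ means never treated; treatment is irreversible, $W_t=\mathbf 1\{G\le t\}$); a subgroup $S\in\mathcal S$; covariates $X$; and real potential outcomes $Y_t(g';\sigma)$ for every period $t$, every possible cohort $g'$ (including $\infty$) and every $\sigma\in\mathcal S$, interpreted as the outcome at $t$ had the unit first been treated at $g'$ and belonged to subgroup $\sigma$. Write $Y_t(g'):=Y_t(g';S)$ and the observed outcome $Y_t:=Y_t(G;S)$. Units are i.i.d. draws (panel data: all $Y_0,\dots,Y_{\mathcal T}$ observed for each unit). The not-yet-treated units at period $t$ are those with $G>t$ (this includes $G=\infty$). Define $$DATT_{s-s'}(g,t):=\mathbb E[Y_t(g)-Y_t(\infty)\mid G=g,S=s]-\mathbb E[Y_t(g)-Y_t(\infty)\mid G=g,S=s'].$$ *)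

theory Defs
  imports "HOL-Probability.Probability"
begin

definition cexp :: "'a measure \<Rightarrow> 'a set \<Rightarrow> ('a \<Rightarrow> real) \<Rightarrow> real" where
  "cexp M A X = (\<integral>\<omega>. indicator A \<omega> * X \<omega> \<partial>M) / measure M A"

definition cell :: "'a measure \<Rightarrow> ('a \<Rightarrow> enat) \<Rightarrow> ('a \<Rightarrow> 's) \<Rightarrow> (enat \<Rightarrow> bool) \<Rightarrow> 's \<Rightarrow> 'a set" where
  "cell M G S C \<sigma> = {\<omega> \<in> space M. C (G \<omega>) \<and> S \<omega> = \<sigma>}"

text \<open>Potential outcome Y t g' sigma omega = Y_t(g';sigma); Y_t(g') := Y_t(g';S).\<close>
definition pot :: "(nat \<Rightarrow> enat \<Rightarrow> 's \<Rightarrow> 'a \<Rightarrow> real) \<Rightarrow> ('a \<Rightarrow> 's) \<Rightarrow> nat \<Rightarrow> enat \<Rightarrow> 'a \<Rightarrow> real" where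
  "pot Y S t g' \<omega> = Y t g' (S \<omega>) \<omega>"

text \<open>Observed outcome Y_t = Y_t(G;S).\<close>
definition obs :: "(nat \<Rightarrow> enat \<Rightarrow> 's \<Rightarrow> 'a \<Rightarrow> real) \<Rightarrow> ('a \<Rightarrow> enat) \<Rightarrow> ('a \<Rightarrow> 's) \<Rightarrow> nat \<Rightarrow> 'a \<Rightarrow> real" where
  "obs Y G S t \<omega> = Y t (G \<omega>) (S \<omega>) \<omega>"

definition DATT :: "'a measure \<Rightarrow> ('a \<Rightarrow> enat) \<Rightarrow> ('a \<Rightarrow> 's) \<Rightarrow> (nat \<Rightarrow> enat \<Rightarrow> 's \<Rightarrow> 'a \<Rightarrow> real)
    \<Rightarrow> 's \<Rightarrow> 's \<Rightarrow> nat \<Rightarrow> nat \<Rightarrow> real" where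
  "DATT M G S Y s s' g t =
     cexp M (cell M G S (\<lambda>x. x = enat g) s) (\<lambda>\<omega>. pot Y S t (enat g) \<omega> - pot Y S t \<infinity> \<omega>)
   - cexp M (cell M G S (\<lambda>x. x = enat g) s') (\<lambda>\<omega>. pot Y S t (enat g) \<omega> - pot Y S t \<infinity> \<omega>)"

end

theory Submission imports Defs begin

lemma cell_sets:
  assumes "G \<in> measurable M (count_space UNIV)" "S \<in> measurable M (count_space UNIV)"
  shows "cell M G S C \<sigma> \<in> sets M"
proof -
  have "cell M G S C \<sigma> = (G -` {x. C x} \<inter> space M) \<inter> (S -` {\<sigma>} \<inter> space M)"
    unfolding cell_def by auto
  moreover have "G -` {x. C x} \<inter> space M \<in> sets M" using assms(1) measurable_sets by fastforce
  moreover have "S -` {\<sigma>} \<inter> space M \<in> sets M" using assms(2) measurable_sets by fastforce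
  ultimately show ?thesis by auto
qed

lemma int_null:
  fixes f :: "'a \<Rightarrow> real"
  assumes "A \<in> sets M" "measure M A = 0" "finite_measure M"
  shows "(\<integral>\<omega>. indicator A \<omega> * f \<omega> \<partial>M) = 0"
proof -
  have "A \<in> null_sets M" using assms
    by (simp add: finite_measure.emeasure_eq_measure null_sets_def)
  then have "AE \<omega> in M. indicator A \<omega> * f \<omega> = 0"
    using AE_not_in[OF \<open>A \<in> null_sets M\<close>] by (auto elim: eventually_mono)
  then show ?thesis by (rule integral_eq_zero_AE)
qed

lemma decomp:
  assumes G_range: "\<forall>\<omega>\<in>space M. G \<omega> \<in> enat ` {1..T} \<union> {\<infinity>}"
    and "\<omega> \<in> space M"
  fixes Z :: "enat \<Rightarrow> 'a \<Rightarrow> real"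
  shows "indicator (cell M G S (\<lambda>x. x > enat t) \<sigma>) \<omega> * Z (G \<omega>) \<omega>
    = indicator (cell M G S (\<lambda>x. x = \<infinity>) \<sigma>) \<omega> * Z \<infinity> \<omega>
      + (\<Sum>g'\<in>{t+1..T}. indicator (cell M G S (\<lambda>x. x = enat g') \<sigma>) \<omega> * Z (enat g') \<omega>)"
proof -
  have ind: "\<And>C. indicator (cell M G S C \<sigma>) \<omega> = (if C (G \<omega>) \<and> S \<omega> = \<sigma> then 1 else (0::real))"
    using assms(2) by (simp add: cell_def indicator_def)
  show ?thesis
  proof (cases "G \<omega> = \<infinity>")
    case True
    then show ?thesis using assms(2) by (simp add: indicator_def cell_def)
  next
    case False
    then obtain k where k: "G \<omega> = enat k" "k \<in> {1..T}" using G_range assms(2) by auto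
    have "(\<Sum>g'\<in>{t+1..T}. indicator (cell M G S (\<lambda>x. x = enat g') \<sigma>) \<omega> * Z (enat g') \<omega>)
        = (\<Sum>g'\<in>{t+1..T}. if g' = k then (if S \<omega> = \<sigma> then Z (enat k) \<omega> else 0) else 0)"
      by (rule sum.cong) (auto simp: ind k)
    also have "\<dots> = (if k \<in> {t+1..T} then (if S \<omega> = \<sigma> then Z (enat k) \<omega> else 0) else 0)"
      by (simp add: sum.delta')
    finally show ?thesis using k by (auto simp: ind)
  qed
qed

lemma int_cong_cell:
  fixes f h :: "'a \<Rightarrow> real"
  assumes "\<And>\<omega>. \<omega> \<in> cell M G S C \<sigma> \<Longrightarrow> f \<omega> = h \<omega>"
  shows "(\<integral>\<omega>. indicator (cell M G S C \<sigma>) \<omega> * f \<omega> \<partial>M) = (\<integral>\<omega>. indicator (cell M G S C \<sigma>) \<omega> * h \<omega> \<partial>M)"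
  by (rule Bochner_Integration.integral_cong) (auto simp: assms split: split_indicator)

lemma cexp_cong_cell:
  assumes "\<And>\<omega>. \<omega> \<in> cell M G S C \<sigma> \<Longrightarrow> f \<omega> = h \<omega>"
  shows "cexp M (cell M G S C \<sigma>) f = cexp M (cell M G S C \<sigma>) h"
proof -
  have "(\<integral>\<omega>. indicator (cell M G S C \<sigma>) \<omega> * f \<omega> \<partial>M) = (\<integral>\<omega>. indicator (cell M G S C \<sigma>) \<omega> * h \<omega> \<partial>M)"
    by (rule int_cong_cell) (rule assms)
  then show ?thesis unfolding cexp_def by simp
qed

lemma cexp_diff:
  fixes f h :: "'a \<Rightarrow> real"
  assumes "A \<in> sets M" "integrable M f" "integrable M h"
  shows "cexp M A (\<lambda>\<omega>. f \<omega> - h \<omega>) = cexp M A f - cexp M A h"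
proof -
  have "(\<integral>\<omega>. indicator A \<omega> * (f \<omega> - h \<omega>) \<partial>M) = (\<integral>\<omega>. indicator A \<omega> * f \<omega> - indicator A \<omega> * h \<omega> \<partial>M)"
    by (simp add: algebra_simps)
  also have "\<dots> = (\<integral>\<omega>. indicator A \<omega> * f \<omega> \<partial>M) - (\<integral>\<omega>. indicator A \<omega> * h \<omega> \<partial>M)"
    using integrable_mult_indicator[OF assms(1) assms(2)] integrable_mult_indicator[OF assms(1) assms(3)]
    by (intro Bochner_Integration.integral_diff) auto
  finally show ?thesis unfolding cexp_def by (simp add: diff_divide_distrib)
qed

lemma cexp_diff_int:
  fixes f h :: "'a \<Rightarrow> real"
  assumes "integrable M (\<lambda>\<omega>. indicator A \<omega> * f \<omega>)" "integrable M (\<lambda>\<omega>. indicator A \<omega> * h \<omega>)"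
  shows "cexp M A (\<lambda>\<omega>. f \<omega> - h \<omega>) = cexp M A f - cexp M A h"
proof -
  have "(\<integral>\<omega>. indicator A \<omega> * (f \<omega> - h \<omega>) \<partial>M) = (\<integral>\<omega>. indicator A \<omega> * f \<omega> - indicator A \<omega> * h \<omega> \<partial>M)"
    by (simp add: algebra_simps)
  also have "\<dots> = (\<integral>\<omega>. indicator A \<omega> * f \<omega> \<partial>M) - (\<integral>\<omega>. indicator A \<omega> * h \<omega> \<partial>M)"
    using assms by (intro Bochner_Integration.integral_diff) auto
  finally show ?thesis unfolding cexp_def by (simp add: diff_divide_distrib)
qed

lemma bigcell:
  fixes M :: "'a measure" and G :: "'a \<Rightarrow> enat" and S :: "'a \<Rightarrow> 's"
    and Y :: "nat \<Rightarrow> enat \<Rightarrow> 's \<Rightarrow> 'a \<Rightarrow> real"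
  assumes prob: "prob_space M"
    and G_meas: "G \<in> measurable M (count_space UNIV)"
    and S_meas: "S \<in> measurable M (count_space UNIV)"
    and G_range: "\<forall>\<omega>\<in>space M. G \<omega> \<in> enat ` {1..T} \<union> {\<infinity>}"
    and Y_int: "\<forall>\<tau>\<le>T. \<forall>g'\<in>enat ` {1..T} \<union> {\<infinity>}. \<forall>\<sigma>\<in>SS. integrable M (Y \<tau> g' \<sigma>)"
    and \<sigma>in: "\<sigma> \<in> SS" and tT: "t \<le> T" and \<tau>t: "\<tau> \<le> t"
    and no_antic: "\<forall>g'\<in>{1..T}. \<forall>\<tau><g'. \<forall>\<sigma>\<in>SS.
        measure M (cell M G S (\<lambda>x. x = enat g') \<sigma>) > 0 \<longrightarrow>
        cexp M (cell M G S (\<lambda>x. x = enat g') \<sigma>) (pot Y S \<tau> (enat g'))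
          = cexp M (cell M G S (\<lambda>x. x = enat g') \<sigma>) (pot Y S \<tau> \<infinity>)"
  shows "integrable M (\<lambda>\<omega>. indicator (cell M G S (\<lambda>x. x > enat t) \<sigma>) \<omega> * obs Y G S \<tau> \<omega>)"
    and "(\<integral>\<omega>. indicator (cell M G S (\<lambda>x. x > enat t) \<sigma>) \<omega> * obs Y G S \<tau> \<omega> \<partial>M)
       = (\<integral>\<omega>. indicator (cell M G S (\<lambda>x. x > enat t) \<sigma>) \<omega> * Y \<tau> \<infinity> \<sigma> \<omega> \<partial>M)"
proof -
  interpret prob_space M by (rule prob)
  let ?B = "cell M G S (\<lambda>x. x > enat t) \<sigma>"
  let ?Ci = "cell M G S (\<lambda>x. x = \<infinity>) \<sigma>"
  let ?C = "\<lambda>g'. cell M G S (\<lambda>x. x = enat g') \<sigma>"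
  have \<tau>T: "\<tau> \<le> T" using \<tau>t tT by simp
  have intY: "integrable M (Y \<tau> g' \<sigma>)" if "g' \<in> enat ` {1..T} \<union> {\<infinity>}" for g'
    using Y_int \<tau>T that \<sigma>in by blast
  have intC: "integrable M (\<lambda>\<omega>. indicator (cell M G S C \<sigma>) \<omega> * Y \<tau> g' \<sigma> \<omega>)"
    if "g' \<in> enat ` {1..T} \<union> {\<infinity>}" for g' C
    using integrable_mult_indicator[OF cell_sets[OF G_meas S_meas] intY[OF that]] by simp
  have e1: "indicator ?B \<omega> * obs Y G S \<tau> \<omega> = indicator ?Ci \<omega> * Y \<tau> \<infinity> \<sigma> \<omega>
      + (\<Sum>g'\<in>{t+1..T}. indicator (?C g') \<omega> * Y \<tau> (enat g') \<sigma> \<omega>)" if "\<omega> \<in> space M" for \<omega>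
  proof -
    have "indicator ?B \<omega> * obs Y G S \<tau> \<omega> = indicator ?B \<omega> * Y \<tau> (G \<omega>) \<sigma> \<omega>"
      by (auto simp: indicator_def cell_def obs_def)
    also have "\<dots> = indicator ?Ci \<omega> * Y \<tau> \<infinity> \<sigma> \<omega>
      + (\<Sum>g'\<in>{t+1..T}. indicator (?C g') \<omega> * Y \<tau> (enat g') \<sigma> \<omega>)"
      by (rule decomp[OF G_range that, where Z="\<lambda>g. Y \<tau> g \<sigma>"])
    finally show ?thesis .
  qed
  have e2: "indicator ?B \<omega> * Y \<tau> \<infinity> \<sigma> \<omega> = indicator ?Ci \<omega> * Y \<tau> \<infinity> \<sigma> \<omega>
      + (\<Sum>g'\<in>{t+1..T}. indicator (?C g') \<omega> * Y \<tau> \<infinity> \<sigma> \<omega>)" if "\<omega> \<in> space M" for \<omega>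
    by (rule decomp[OF G_range that, where Z="\<lambda>g. Y \<tau> \<infinity> \<sigma>"])
  have ints1: "integrable M (\<lambda>\<omega>. indicator ?Ci \<omega> * Y \<tau> \<infinity> \<sigma> \<omega>
      + (\<Sum>g'\<in>{t+1..T}. indicator (?C g') \<omega> * Y \<tau> (enat g') \<sigma> \<omega>))"
    by (intro Bochner_Integration.integrable_add Bochner_Integration.integrable_sum intC) auto
  show "integrable M (\<lambda>\<omega>. indicator ?B \<omega> * obs Y G S \<tau> \<omega>)"
    by (rule Bochner_Integration.integrable_cong[THEN iffD1, OF refl _ ints1]) (simp add: e1)
  have termeq: "(\<integral>\<omega>. indicator (?C g') \<omega> * Y \<tau> (enat g') \<sigma> \<omega> \<partial>M)
      = (\<integral>\<omega>. indicator (?C g') \<omega> * Y \<tau> \<infinity> \<sigma> \<omega> \<partial>M)" if g': "g' \<in> {t+1..T}" for g'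
  proof (cases "measure M (?C g') > 0")
    case True
    have "cexp M (?C g') (pot Y S \<tau> (enat g')) = cexp M (?C g') (pot Y S \<tau> \<infinity>)"
      using no_antic g' \<tau>t \<sigma>in True by auto
    moreover have "cexp M (?C g') (pot Y S \<tau> (enat g')) = cexp M (?C g') (Y \<tau> (enat g') \<sigma>)"
      by (rule cexp_cong_cell) (simp add: cell_def pot_def)
    moreover have "cexp M (?C g') (pot Y S \<tau> \<infinity>) = cexp M (?C g') (Y \<tau> \<infinity> \<sigma>)"
      by (rule cexp_cong_cell) (simp add: cell_def pot_def)
    ultimately show ?thesis using True by (simp add: cexp_def)
  next
    case False
    then have "measure M (?C g') = 0" using measure_nonneg[of M "?C g'"] by linarith
    then show ?thesis using int_null[OF cell_sets[OF G_meas S_meas]] finite_measure_axioms by simp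
  qed
  have "(\<integral>\<omega>. indicator ?B \<omega> * obs Y G S \<tau> \<omega> \<partial>M) = (\<integral>\<omega>. indicator ?Ci \<omega> * Y \<tau> \<infinity> \<sigma> \<omega>
      + (\<Sum>g'\<in>{t+1..T}. indicator (?C g') \<omega> * Y \<tau> (enat g') \<sigma> \<omega>) \<partial>M)"
    by (rule Bochner_Integration.integral_cong) (simp_all add: e1)
  also have "\<dots> = (\<integral>\<omega>. indicator ?Ci \<omega> * Y \<tau> \<infinity> \<sigma> \<omega> \<partial>M)
      + (\<Sum>g'\<in>{t+1..T}. (\<integral>\<omega>. indicator (?C g') \<omega> * Y \<tau> (enat g') \<sigma> \<omega> \<partial>M))"
    apply (subst Bochner_Integration.integral_add)
      apply (rule intC, simp)
     apply (rule Bochner_Integration.integrable_sum, rule intC, force)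
    apply (subst Bochner_Integration.integral_sum)
     apply (rule intC, force)
    apply (rule refl)
    done
  also have "\<dots> = (\<integral>\<omega>. indicator ?Ci \<omega> * Y \<tau> \<infinity> \<sigma> \<omega> \<partial>M)
      + (\<Sum>g'\<in>{t+1..T}. (\<integral>\<omega>. indicator (?C g') \<omega> * Y \<tau> \<infinity> \<sigma> \<omega> \<partial>M))"
    using termeq by simp
  also have "\<dots> = (\<integral>\<omega>. indicator ?Ci \<omega> * Y \<tau> \<infinity> \<sigma> \<omega>
      + (\<Sum>g'\<in>{t+1..T}. indicator (?C g') \<omega> * Y \<tau> \<infinity> \<sigma> \<omega>) \<partial>M)"
    apply (subst Bochner_Integration.integral_add)
      apply (rule intC, simp)
     apply (rule Bochner_Integration.integrable_sum, rule intC, force)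
    apply (subst Bochner_Integration.integral_sum)
     apply (rule intC, force)
    apply (rule refl)
    done
  also have "\<dots> = (\<integral>\<omega>. indicator ?B \<omega> * Y \<tau> \<infinity> \<sigma> \<omega> \<partial>M)"
    by (rule Bochner_Integration.integral_cong) (simp_all add: e2)
  finally show "(\<integral>\<omega>. indicator ?B \<omega> * obs Y G S \<tau> \<omega> \<partial>M) = (\<integral>\<omega>. indicator ?B \<omega> * Y \<tau> \<infinity> \<sigma> \<omega> \<partial>M)" .
qed


lemma potdiff:
  fixes Y :: "nat \<Rightarrow> enat \<Rightarrow> 's \<Rightarrow> 'a \<Rightarrow> real"
  assumes G_meas: "G \<in> measurable M (count_space UNIV)"
    and S_meas: "S \<in> measurable M (count_space UNIV)"
    and "integrable M (Y \<tau>1 g1 \<sigma>)" "integrable M (Y \<tau>2 g2 \<sigma>)"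
  shows "cexp M (cell M G S C \<sigma>) (\<lambda>\<omega>. pot Y S \<tau>1 g1 \<omega> - pot Y S \<tau>2 g2 \<omega>)
     = cexp M (cell M G S C \<sigma>) (Y \<tau>1 g1 \<sigma>) - cexp M (cell M G S C \<sigma>) (Y \<tau>2 g2 \<sigma>)"
proof -
  have "cexp M (cell M G S C \<sigma>) (\<lambda>\<omega>. pot Y S \<tau>1 g1 \<omega> - pot Y S \<tau>2 g2 \<omega>)
     = cexp M (cell M G S C \<sigma>) (\<lambda>\<omega>. Y \<tau>1 g1 \<sigma> \<omega> - Y \<tau>2 g2 \<sigma> \<omega>)"
    by (rule cexp_cong_cell) (simp add: cell_def pot_def)
  also have "\<dots> = cexp M (cell M G S C \<sigma>) (Y \<tau>1 g1 \<sigma>) - cexp M (cell M G S C \<sigma>) (Y \<tau>2 g2 \<sigma>)"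
    by (rule cexp_diff[OF cell_sets[OF G_meas S_meas] assms(3,4)])
  finally show ?thesis .
qed

theorem proposition1:
  fixes M :: "'a measure" and T :: nat and SS :: "'s set"
    and G :: "'a \<Rightarrow> enat" and S :: "'a \<Rightarrow> 's"
    and Y :: "nat \<Rightarrow> enat \<Rightarrow> 's \<Rightarrow> 'a \<Rightarrow> real"
    and s s' :: 's and g t :: nat
  assumes prob: "prob_space M"
    and SS_fin: "finite SS"
    and G_meas: "G \<in> measurable M (count_space UNIV)"
    and S_meas: "S \<in> measurable M (count_space UNIV)"
    and G_range: "\<forall>\<omega>\<in>space M. G \<omega> \<in> enat ` {1..T} \<union> {\<infinity>}"
    and S_range: "\<forall>\<omega>\<in>space M. S \<omega> \<in> SS"
    and Y_int: "\<forall>\<tau>\<le>T. \<forall>g'\<in>enat ` {1..T} \<union> {\<infinity>}. \<forall>\<sigma>\<in>SS. integrable M (Y \<tau> g' \<sigma>)"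
    and s_in: "s \<in> SS" and s'_in: "s' \<in> SS" and ss': "s \<noteq> s'"
    and g_range: "1 \<le> g" and gt: "g \<le> t" and tT: "t \<le> T"
    and pos_g: "\<forall>\<sigma>\<in>{s, s'}. measure M (cell M G S (\<lambda>x. x = enat g) \<sigma>) > 0"
    and no_antic: "\<forall>g'\<in>{1..T}. \<forall>\<tau><g'. \<forall>\<sigma>\<in>SS.
        measure M (cell M G S (\<lambda>x. x = enat g') \<sigma>) > 0 \<longrightarrow>
        cexp M (cell M G S (\<lambda>x. x = enat g') \<sigma>) (pot Y S \<tau> (enat g'))
          = cexp M (cell M G S (\<lambda>x. x = enat g') \<sigma>) (pot Y S \<tau> \<infinity>)"
  shows
   "((\<forall>\<sigma>\<in>{s, s'}. measure M (cell M G S (\<lambda>x. x > enat t) \<sigma>) > 0) \<and>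
     cexp M (cell M G S (\<lambda>x. x = enat g) s) (\<lambda>\<omega>. pot Y S t \<infinity> \<omega> - pot Y S (g - 1) \<infinity> \<omega>)
     - cexp M (cell M G S (\<lambda>x. x = enat g) s') (\<lambda>\<omega>. pot Y S t \<infinity> \<omega> - pot Y S (g - 1) \<infinity> \<omega>)
     = cexp M (cell M G S (\<lambda>x. x > enat t) s) (\<lambda>\<omega>. pot Y S t \<infinity> \<omega> - pot Y S (g - 1) \<infinity> \<omega>)
     - cexp M (cell M G S (\<lambda>x. x > enat t) s') (\<lambda>\<omega>. pot Y S t \<infinity> \<omega> - pot Y S (g - 1) \<infinity> \<omega>)
    \<longrightarrow>
     DATT M G S Y s s' g t =
       cexp M (cell M G S (\<lambda>x. x = enat g) s) (\<lambda>\<omega>. obs Y G S t \<omega> - obs Y G S (g - 1) \<omega>)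
     - cexp M (cell M G S (\<lambda>x. x = enat g) s') (\<lambda>\<omega>. obs Y G S t \<omega> - obs Y G S (g - 1) \<omega>)
     - (cexp M (cell M G S (\<lambda>x. x > enat t) s) (\<lambda>\<omega>. obs Y G S t \<omega> - obs Y G S (g - 1) \<omega>)
      - cexp M (cell M G S (\<lambda>x. x > enat t) s') (\<lambda>\<omega>. obs Y G S t \<omega> - obs Y G S (g - 1) \<omega>)))
  \<and>
   ((\<forall>\<sigma>\<in>{s, s'}. measure M (cell M G S (\<lambda>x. x = \<infinity>) \<sigma>) > 0) \<and>
     cexp M (cell M G S (\<lambda>x. x = enat g) s) (\<lambda>\<omega>. pot Y S t \<infinity> \<omega> - pot Y S (g - 1) \<infinity> \<omega>)
     - cexp M (cell M G S (\<lambda>x. x = enat g) s') (\<lambda>\<omega>. pot Y S t \<infinity> \<omega> - pot Y S (g - 1) \<infinity> \<omega>)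
     = cexp M (cell M G S (\<lambda>x. x = \<infinity>) s) (\<lambda>\<omega>. pot Y S t \<infinity> \<omega> - pot Y S (g - 1) \<infinity> \<omega>)
     - cexp M (cell M G S (\<lambda>x. x = \<infinity>) s') (\<lambda>\<omega>. pot Y S t \<infinity> \<omega> - pot Y S (g - 1) \<infinity> \<omega>)
    \<longrightarrow>
     DATT M G S Y s s' g t =
       cexp M (cell M G S (\<lambda>x. x = enat g) s) (\<lambda>\<omega>. obs Y G S t \<omega> - obs Y G S (g - 1) \<omega>)
     - cexp M (cell M G S (\<lambda>x. x = enat g) s') (\<lambda>\<omega>. obs Y G S t \<omega> - obs Y G S (g - 1) \<omega>)
     - (cexp M (cell M G S (\<lambda>x. x = \<infinity>) s) (\<lambda>\<omega>. obs Y G S t \<omega> - obs Y G S (g - 1) \<omega>)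
      - cexp M (cell M G S (\<lambda>x. x = \<infinity>) s') (\<lambda>\<omega>. obs Y G S t \<omega> - obs Y G S (g - 1) \<omega>)))"
proof -
  interpret prob_space M by (rule prob)
  have gT: "g \<in> {1..T}" using g_range gt tT by simp
  have g1T: "g - 1 \<le> T" "g - 1 < g" using gT g_range by auto
  have iY: "integrable M (Y \<tau> g' \<sigma>)" if "\<tau> \<le> T" "g' \<in> enat ` {1..T} \<union> {\<infinity>}" "\<sigma> \<in> SS" for \<tau> g' \<sigma>
    using Y_int that by blast
  let ?Cg = "\<lambda>\<sigma>. cell M G S (\<lambda>x. x = enat g) \<sigma>"
  have cg: "cexp M (?Cg \<sigma>) (\<lambda>\<omega>. pot Y S t (enat g) \<omega> - pot Y S t \<infinity> \<omega>)
       - (cexp M (?Cg \<sigma>) (\<lambda>\<omega>. obs Y G S t \<omega> - obs Y G S (g - 1) \<omega>)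
          - cexp M (?Cg \<sigma>) (\<lambda>\<omega>. pot Y S t \<infinity> \<omega> - pot Y S (g - 1) \<infinity> \<omega>)) = 0"
    if \<sigma>: "\<sigma> \<in> {s, s'}" for \<sigma>
  proof -
    have \<sigma>S: "\<sigma> \<in> SS" using \<sigma> s_in s'_in by auto
    have F1: "cexp M (?Cg \<sigma>) (\<lambda>\<omega>. pot Y S t (enat g) \<omega> - pot Y S t \<infinity> \<omega>)
        = cexp M (?Cg \<sigma>) (Y t (enat g) \<sigma>) - cexp M (?Cg \<sigma>) (Y t \<infinity> \<sigma>)"
      by (rule potdiff[OF G_meas S_meas]) (use iY tT gT \<sigma>S in auto)
    have F3: "cexp M (?Cg \<sigma>) (\<lambda>\<omega>. pot Y S t \<infinity> \<omega> - pot Y S (g - 1) \<infinity> \<omega>)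
        = cexp M (?Cg \<sigma>) (Y t \<infinity> \<sigma>) - cexp M (?Cg \<sigma>) (Y (g - 1) \<infinity> \<sigma>)"
      by (rule potdiff[OF G_meas S_meas]) (use iY tT g1T \<sigma>S in auto)
    have "cexp M (?Cg \<sigma>) (\<lambda>\<omega>. obs Y G S t \<omega> - obs Y G S (g - 1) \<omega>)
        = cexp M (?Cg \<sigma>) (\<lambda>\<omega>. pot Y S t (enat g) \<omega> - pot Y S (g - 1) (enat g) \<omega>)"
      by (rule cexp_cong_cell) (simp add: cell_def pot_def obs_def)
    also have "\<dots> = cexp M (?Cg \<sigma>) (Y t (enat g) \<sigma>) - cexp M (?Cg \<sigma>) (Y (g - 1) (enat g) \<sigma>)"
      by (rule potdiff[OF G_meas S_meas]) (use iY tT g1T gT \<sigma>S in auto)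
    finally have F2: "cexp M (?Cg \<sigma>) (\<lambda>\<omega>. obs Y G S t \<omega> - obs Y G S (g - 1) \<omega>)
        = cexp M (?Cg \<sigma>) (Y t (enat g) \<sigma>) - cexp M (?Cg \<sigma>) (Y (g - 1) (enat g) \<sigma>)" .
    have "cexp M (?Cg \<sigma>) (pot Y S (g - 1) (enat g)) = cexp M (?Cg \<sigma>) (pot Y S (g - 1) \<infinity>)"
      using no_antic gT g1T \<sigma>S pos_g \<sigma> by blast
    moreover have "cexp M (?Cg \<sigma>) (pot Y S (g - 1) (enat g)) = cexp M (?Cg \<sigma>) (Y (g - 1) (enat g) \<sigma>)"
      by (rule cexp_cong_cell) (simp add: cell_def pot_def)
    moreover have "cexp M (?Cg \<sigma>) (pot Y S (g - 1) \<infinity>) = cexp M (?Cg \<sigma>) (Y (g - 1) \<infinity> \<sigma>)"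
      by (rule cexp_cong_cell) (simp add: cell_def pot_def)
    ultimately have F4: "cexp M (?Cg \<sigma>) (Y (g - 1) (enat g) \<sigma>) = cexp M (?Cg \<sigma>) (Y (g - 1) \<infinity> \<sigma>)"
      by simp
    show ?thesis using F1 F2 F3 F4 by simp
  qed
  have cgs: "DATT M G S Y s s' g t =
       cexp M (?Cg s) (\<lambda>\<omega>. obs Y G S t \<omega> - obs Y G S (g - 1) \<omega>)
     - cexp M (?Cg s') (\<lambda>\<omega>. obs Y G S t \<omega> - obs Y G S (g - 1) \<omega>)
     - (cexp M (?Cg s) (\<lambda>\<omega>. pot Y S t \<infinity> \<omega> - pot Y S (g - 1) \<infinity> \<omega>)
     - cexp M (?Cg s') (\<lambda>\<omega>. pot Y S t \<infinity> \<omega> - pot Y S (g - 1) \<infinity> \<omega>))"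
    using cg[of s] cg[of s'] unfolding DATT_def by simp
  have bigA: "cexp M (cell M G S (\<lambda>x. x > enat t) \<sigma>) (\<lambda>\<omega>. obs Y G S t \<omega> - obs Y G S (g - 1) \<omega>)
     = cexp M (cell M G S (\<lambda>x. x > enat t) \<sigma>) (\<lambda>\<omega>. pot Y S t \<infinity> \<omega> - pot Y S (g - 1) \<infinity> \<omega>)"
    if \<sigma>: "\<sigma> \<in> {s, s'}" for \<sigma>
  proof -
    have \<sigma>S: "\<sigma> \<in> SS" using \<sigma> s_in s'_in by auto
    have g1t: "g - 1 \<le> t" using gt by simp
    note b1 = bigcell[OF prob G_meas S_meas G_range Y_int \<sigma>S tT order_refl no_antic]
    note b2 = bigcell[OF prob G_meas S_meas G_range Y_int \<sigma>S tT g1t no_antic]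
    have "cexp M (cell M G S (\<lambda>x. x > enat t) \<sigma>) (\<lambda>\<omega>. obs Y G S t \<omega> - obs Y G S (g - 1) \<omega>)
       = cexp M (cell M G S (\<lambda>x. x > enat t) \<sigma>) (obs Y G S t) - cexp M (cell M G S (\<lambda>x. x > enat t) \<sigma>) (obs Y G S (g - 1))"
      by (rule cexp_diff_int[OF b1(1) b2(1)])
    also have "\<dots> = cexp M (cell M G S (\<lambda>x. x > enat t) \<sigma>) (Y t \<infinity> \<sigma>) - cexp M (cell M G S (\<lambda>x. x > enat t) \<sigma>) (Y (g - 1) \<infinity> \<sigma>)"
      unfolding cexp_def using b1(2) b2(2) by simp
    also have "\<dots> = cexp M (cell M G S (\<lambda>x. x > enat t) \<sigma>) (\<lambda>\<omega>. pot Y S t \<infinity> \<omega> - pot Y S (g - 1) \<infinity> \<omega>)"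
      by (rule potdiff[OF G_meas S_meas, symmetric]) (use iY tT g1T \<sigma>S in auto)
    finally show ?thesis .
  qed
  have bigB: "cexp M (cell M G S (\<lambda>x. x = \<infinity>) \<sigma>) (\<lambda>\<omega>. obs Y G S t \<omega> - obs Y G S (g - 1) \<omega>)
     = cexp M (cell M G S (\<lambda>x. x = \<infinity>) \<sigma>) (\<lambda>\<omega>. pot Y S t \<infinity> \<omega> - pot Y S (g - 1) \<infinity> \<omega>)" for \<sigma>
    by (rule cexp_cong_cell) (simp add: cell_def pot_def obs_def)
  show ?thesis
    using cgs bigA[of s] bigA[of s'] bigB[of s] bigB[of s'] by simp
qed

end
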